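(* Let $m,n,s,k,c$ be positive integers such that $2\leq s\leq n$, $2\leq k\leq m$ and $ms=nk$. Suppose that $s$ and $k$ are both even and $(s,k)\neq(2,2)$. Then there exists a $\mathrm{MS}^0_{\mathbb Z_{nkc+1}^*}(m,n;s,k;c)$.
   Context: Let $(\Gamma,+)$ be an abelian group and $\Omega\subseteq\Gamma$ with $|\Omega|>1$. A partially filled array is an array in which some cells may be empty. A zero-sum magic partially filled array set $\mathrm{MS}^0_\Omega(m,n;s,k;c)$ is a set of $c$ partially filled $m\times n$ arrays with entries in $\Omega$ such that every element of $\Omega$ appears exactly once in exactly one of the arrays, every array has exactly $s$ filled cells in each row and exactly $k$ in each column, and in every array the entries of each row and of each column sum to $0_\Gamma$. $\mathbb Z_N$ is the cyclic group of order $N$ and $\mathbb Z_N^*=\mathbb Z_N\setminus\{0\}$. *)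

theory Defs
  imports Main
begin

text \<open>Elements of the cyclic group Z_N are represented by their canonical
residues 0..N-1 (as integers); Z_N^* = Z_N minus 0 is then the set {1..N-1}.
A set of c partially filled m x n arrays is a function A, where A t i j is the
content of cell (i,j) of array t (t < c, i < m, j < n); None means empty.\<close>

definition ZN_star :: "nat \<Rightarrow> int set" where
  "ZN_star N = {1 .. int N - 1}"

definition row_cells :: "(nat \<Rightarrow> nat \<Rightarrow> nat \<Rightarrow> int option) \<Rightarrow> nat \<Rightarrow> nat \<Rightarrow> nat \<Rightarrow> nat set" where
  "row_cells A n t i = {j. j < n \<and> A t i j \<noteq> None}"

definition col_cells :: "(nat \<Rightarrow> nat \<Rightarrow> nat \<Rightarrow> int option) \<Rightarrow> nat \<Rightarrow> nat \<Rightarrow> nat \<Rightarrow> nat set" where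
  "col_cells A m t j = {i. i < m \<and> A t i j \<noteq> None}"

definition is_MS0_ZN_star ::
  "nat \<Rightarrow> nat \<Rightarrow> nat \<Rightarrow> nat \<Rightarrow> nat \<Rightarrow> nat \<Rightarrow> (nat \<Rightarrow> nat \<Rightarrow> nat \<Rightarrow> int option) \<Rightarrow> bool" where
  "is_MS0_ZN_star N m n s k c A \<longleftrightarrow>
     (\<forall>t i j. (c \<le> t \<or> m \<le> i \<or> n \<le> j) \<longrightarrow> A t i j = None) \<and>
     (\<forall>t i j x. A t i j = Some x \<longrightarrow> x \<in> ZN_star N) \<and>
     (\<forall>x \<in> ZN_star N. \<exists>!(t, i, j). A t i j = Some x) \<and>
     (\<forall>t < c. \<forall>i < m. card (row_cells A n t i) = s) \<and>
     (\<forall>t < c. \<forall>j < n. card (col_cells A m t j) = k) \<and>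
     (\<forall>t < c. \<forall>i < m. (\<Sum>j \<in> row_cells A n t i. the (A t i j)) mod int N = 0) \<and>
     (\<forall>t < c. \<forall>j < n. (\<Sum>i \<in> col_cells A m t j. the (A t i j)) mod int N = 0)"

end

theory Submission
  imports Defs
begin


definition mkA :: "('x \<Rightarrow> nat\<times>nat\<times>nat) \<Rightarrow> ('x \<Rightarrow> int) \<Rightarrow> 'x set \<Rightarrow> nat \<Rightarrow> nat \<Rightarrow> nat \<Rightarrow> int option" where
 "mkA cell val X t i j = (if (t,i,j) \<in> cell ` X then Some (val (the_inv_into X cell (t,i,j))) else None)"

lemma mkA_Some:
  assumes "inj_on cell X"
  shows "mkA cell val X t i j = Some v \<longleftrightarrow> (\<exists>x\<in>X. cell x = (t,i,j) \<and> v = val x)"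
proof
  assume "mkA cell val X t i j = Some v"
  then have h: "(t,i,j) \<in> cell ` X" "v = val (the_inv_into X cell (t,i,j))"
    unfolding mkA_def by (auto split: if_splits)
  then obtain x where "x \<in> X" "cell x = (t,i,j)" by auto
  then show "\<exists>x\<in>X. cell x = (t,i,j) \<and> v = val x" using h assms by (auto simp: the_inv_into_f_f)
next
  assume "\<exists>x\<in>X. cell x = (t,i,j) \<and> v = val x"
  then obtain x where "x \<in> X" "cell x = (t,i,j)" "v = val x" by blast
  then show "mkA cell val X t i j = Some v" using assms unfolding mkA_def
    by (metis image_eqI the_inv_into_f_f)
qed

lemma mkA_at:
  assumes "inj_on cell X" "x \<in> X" "cell x = (t,i,j)"
  shows "mkA cell val X t i j = Some (val x)"
  using assms mkA_Some by blast

lemma generic: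
 assumes fin: "finite X" and inj: "inj_on cell X" and bij: "bij_betw val X (ZN_star N)"
 and rng: "\<And>x. x \<in> X \<Longrightarrow> fst (cell x) < c \<and> fst (snd (cell x)) < m \<and> snd (snd (cell x)) < n"
 and rowc: "\<And>t i. t<c \<Longrightarrow> i<m \<Longrightarrow> card {x\<in>X. fst (cell x) = t \<and> fst (snd (cell x)) = i} = s"
 and colc: "\<And>t j. t<c \<Longrightarrow> j<n \<Longrightarrow> card {x\<in>X. fst (cell x) = t \<and> snd (snd (cell x)) = j} = k"
 and rows: "\<And>t i. t<c \<Longrightarrow> i<m \<Longrightarrow> (\<Sum>x\<in>{x\<in>X. fst (cell x) = t \<and> fst (snd (cell x)) = i}. val x) mod int N = 0"
 and cols: "\<And>t j. t<c \<Longrightarrow> j<n \<Longrightarrow> (\<Sum>x\<in>{x\<in>X. fst (cell x) = t \<and> snd (snd (cell x)) = j}. val x) mod int N = 0"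
 shows "is_MS0_ZN_star N m n s k c (mkA cell val X)"
proof -
  let ?A = "mkA cell val X"
  have S: "\<And>t i j v. ?A t i j = Some v \<longleftrightarrow> (\<exists>x\<in>X. cell x = (t,i,j) \<and> v = val x)"
    using mkA_Some[OF inj] .
  have p1: "\<forall>t i j. (c \<le> t \<or> m \<le> i \<or> n \<le> j) \<longrightarrow> ?A t i j = None"
  proof (intro allI impI)
    fix t i j assume h: "c \<le> t \<or> m \<le> i \<or> n \<le> j"
    show "?A t i j = None"
    proof (rule ccontr)
      assume "?A t i j \<noteq> None"
      then obtain v where "?A t i j = Some v" by auto
      then obtain x where "x \<in> X" "cell x = (t,i,j)" using S by blast
      with rng[of x] h show False by auto
    qed
  qed
  have p2: "\<forall>t i j x. ?A t i j = Some x \<longrightarrow> x \<in> ZN_star N"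
    using S bij by (auto simp: bij_betw_def)
  have p3: "\<forall>x \<in> ZN_star N. \<exists>!(t, i, j). ?A t i j = Some x"
  proof
    fix v assume v: "v \<in> ZN_star N"
    then obtain x where x: "x \<in> X" "val x = v" using bij unfolding bij_betw_def by (metis imageE)
    obtain t i j where c: "cell x = (t,i,j)" by (cases "cell x") auto
    show "\<exists>!(t, i, j). ?A t i j = Some v"
    proof (rule ex1I[of _ "(t,i,j)"])
      show "case (t,i,j) of (t, i, j) \<Rightarrow> ?A t i j = Some v" using S x c by auto
    next
      fix y assume "case y of (t, i, j) \<Rightarrow> ?A t i j = Some v"
      then obtain t' i' j' where y: "y = (t',i',j')" "?A t' i' j' = Some v" by (cases y) auto
      then obtain x' where "x' \<in> X" "cell x' = (t',i',j')" "v = val x'" using S by blast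
      with x have "x' = x" using bij by (auto simp: bij_betw_def inj_on_def)
      then show "y = (t,i,j)" using y c \<open>cell x' = _\<close> by simp
    qed
  qed
  define R where "R t i = {x\<in>X. fst (cell x) = t \<and> fst (snd (cell x)) = i}" for t i
  define C where "C t j = {x\<in>X. fst (cell x) = t \<and> snd (snd (cell x)) = j}" for t j
  have Rimg: "row_cells ?A n t i = (\<lambda>x. snd (snd (cell x))) ` R t i" for t i
  proof -
    have "j \<in> row_cells ?A n t i \<longleftrightarrow> j \<in> (\<lambda>x. snd (snd (cell x))) ` R t i" for j
    proof
      assume "j \<in> row_cells ?A n t i"
      then obtain v where "?A t i j = Some v" by (auto simp: row_cells_def)
      then obtain x where "x \<in> X" "cell x = (t,i,j)" using S by blast
      then show "j \<in> (\<lambda>x. snd (snd (cell x))) ` R t i" unfolding R_def by force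
    next
      assume "j \<in> (\<lambda>x. snd (snd (cell x))) ` R t i"
      then obtain x where x: "x \<in> X" "fst (cell x) = t" "fst (snd (cell x)) = i" "j = snd (snd (cell x))"
        unfolding R_def by auto
      then have "cell x = (t,i,j)" by (cases "cell x") auto
      then show "j \<in> row_cells ?A n t i" using x rng[of x] mkA_at[OF inj] by (auto simp: row_cells_def)
    qed
    then show ?thesis by blast
  qed
  have Cimg: "col_cells ?A m t j = (\<lambda>x. fst (snd (cell x))) ` C t j" for t j
  proof -
    have "i \<in> col_cells ?A m t j \<longleftrightarrow> i \<in> (\<lambda>x. fst (snd (cell x))) ` C t j" for i
    proof
      assume "i \<in> col_cells ?A m t j"
      then obtain v where "?A t i j = Some v" by (auto simp: col_cells_def)
      then obtain x where "x \<in> X" "cell x = (t,i,j)" using S by blast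
      then show "i \<in> (\<lambda>x. fst (snd (cell x))) ` C t j" unfolding C_def by force
    next
      assume "i \<in> (\<lambda>x. fst (snd (cell x))) ` C t j"
      then obtain x where x: "x \<in> X" "fst (cell x) = t" "snd (snd (cell x)) = j" "i = fst (snd (cell x))"
        unfolding C_def by auto
      then have "cell x = (t,i,j)" by (cases "cell x") auto
      then show "i \<in> col_cells ?A m t j" using x rng[of x] mkA_at[OF inj] by (auto simp: col_cells_def)
    qed
    then show ?thesis by blast
  qed
  have Rinj: "inj_on (\<lambda>x. snd (snd (cell x))) (R t i)" for t i
  proof
    fix x y assume "x \<in> R t i" "y \<in> R t i" "snd (snd (cell x)) = snd (snd (cell y))"
    then have "cell x = cell y" "x \<in> X" "y \<in> X" unfolding R_def by (auto simp: prod_eq_iff)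
    then show "x = y" using inj by (auto simp: inj_on_def)
  qed
  have Cinj: "inj_on (\<lambda>x. fst (snd (cell x))) (C t j)" for t j
  proof
    fix x y assume "x \<in> C t j" "y \<in> C t j" "fst (snd (cell x)) = fst (snd (cell y))"
    then have "cell x = cell y" "x \<in> X" "y \<in> X" unfolding C_def by (auto simp: prod_eq_iff)
    then show "x = y" using inj by (auto simp: inj_on_def)
  qed
  have p4: "\<forall>t < c. \<forall>i < m. card (row_cells ?A n t i) = s"
    using Rimg Rinj rowc by (simp add: card_image R_def)
  have p5: "\<forall>t < c. \<forall>j < n. card (col_cells ?A m t j) = k"
    using Cimg Cinj colc by (simp add: card_image C_def)
  have p6: "\<forall>t < c. \<forall>i < m. (\<Sum>j \<in> row_cells ?A n t i. the (?A t i j)) mod int N = 0"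
  proof (intro allI impI)
    fix t i assume ti: "t < c" "i < m"
    have "(\<Sum>j \<in> row_cells ?A n t i. the (?A t i j)) = (\<Sum>x\<in>R t i. the (?A t i (snd (snd (cell x)))))"
      unfolding Rimg by (rule sum.reindex[OF Rinj, unfolded comp_def])
    also have "\<dots> = (\<Sum>x\<in>R t i. val x)"
    proof (rule sum.cong[OF refl])
      fix x assume x: "x \<in> R t i"
      then have "cell x = (t,i,snd (snd (cell x)))" "x \<in> X" unfolding R_def by (auto simp: prod_eq_iff)
      then show "the (?A t i (snd (snd (cell x)))) = val x" using mkA_at[OF inj] by simp
    qed
    finally show "(\<Sum>j \<in> row_cells ?A n t i. the (?A t i j)) mod int N = 0"
      using rows[OF ti] by (simp add: R_def)
  qed
  have p7: "\<forall>t < c. \<forall>j < n. (\<Sum>i \<in> col_cells ?A m t j. the (?A t i j)) mod int N = 0"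
  proof (intro allI impI)
    fix t j assume tj: "t < c" "j < n"
    have "(\<Sum>i \<in> col_cells ?A m t j. the (?A t i j)) = (\<Sum>x\<in>C t j. the (?A t (fst (snd (cell x))) j))"
      unfolding Cimg by (rule sum.reindex[OF Cinj, unfolded comp_def])
    also have "\<dots> = (\<Sum>x\<in>C t j. val x)"
    proof (rule sum.cong[OF refl])
      fix x assume x: "x \<in> C t j"
      then have "cell x = (t,fst (snd (cell x)),j)" "x \<in> X" unfolding C_def by (auto simp: prod_eq_iff)
      then show "the (?A t (fst (snd (cell x))) j) = val x" using mkA_at[OF inj] by simp
    qed
    finally show "(\<Sum>i \<in> col_cells ?A m t j. the (?A t i j)) mod int N = 0"
      using cols[OF tj] by (simp add: C_def)
  qed
  show ?thesis unfolding is_MS0_ZN_star_def using p1 p2 p3 p4 p5 p6 p7 by blast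
qed



definition posn :: "nat \<Rightarrow> nat \<Rightarrow> nat" where
  "posn W e = (if even e then e div 2 else (W+1) div 2 + e div 2)"

lemma posn_lt: "e < W \<Longrightarrow> posn W e < W"
  unfolding posn_def by (auto, presburger+)

lemma posn_inj: "inj_on (posn W) {..<W}"
  unfolding posn_def inj_on_def by (auto split: if_splits, presburger+)

lemma posn_bij: "bij_betw (posn W) {..<W} {..<W}"
proof -
  have "posn W ` {..<W} \<subseteq> {..<W}" using posn_lt by auto
  moreover have "card (posn W ` {..<W}) = card {..<W::nat}" using card_image[OF posn_inj] by simp
  ultimately have "posn W ` {..<W} = {..<W}" by (simp add: card_subset_eq)
  then show ?thesis using posn_inj by (simp add: bij_betw_def)
qed

lemma posn_eq: "int e + (if odd e then int W else 0) = 2 * int (posn W e) + (if odd e \<and> even W then 1 else 0)"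
  unfolding posn_def by (auto, presburger+)

lemma posn_even: "e < W \<Longrightarrow> even e \<longleftrightarrow> posn W e < (W+1) div 2"
proof (cases "even e")
  case True
  moreover assume "e < W"
  ultimately have "e div 2 < (W+1) div 2" by presburger
  then show ?thesis using True by (simp add: posn_def)
next
  case False
  then show ?thesis by (simp add: posn_def)
qed

lemma chain:
  fixes m h n kap W e e' a b :: nat
  assumes W: "W = m*h" "W = n*kap" and k: "2*kap \<le> m" "1 \<le> kap"
    and e: "e < W" "e' < W" and same: "posn W e div kap = posn W e' div kap"
    and r: "(e + a) mod m = (e' + b) mod m" and ab: "a \<le> 1" "b \<le> 1"
  shows "e = e' \<and> a = b"
proof -
  define p where "p = posn W e"
  define p' where "p' = posn W e'"
  have m0: "m > 0" using k by auto
  have pe: "int e + (if odd e then int W else 0) = 2 * int p + (if odd e \<and> even W then 1 else 0)"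
    using posn_eq p_def by simp
  have pe': "int e' + (if odd e' then int W else 0) = 2 * int p' + (if odd e' \<and> even W then 1 else 0)"
    using posn_eq p'_def by simp
  have ev: "even e \<longleftrightarrow> p < (W+1) div 2" using posn_even e p_def by simp
  have ev': "even e' \<longleftrightarrow> p' < (W+1) div 2" using posn_even e(2) p'_def by simp
  have dW: "int m dvd int W" using W by simp
  have "int m dvd (int e + int a) - (int e' + int b)"
    using r by (metis mod_eq_dvd_iff of_nat_add zmod_int)
  then have "int m dvd (int e + int a) - (int e' + int b) + ((if odd e then int W else 0) - (if odd e' then int W else 0))"
    using dW by (auto intro: dvd_add dvd_diff)
  then have dv: "int m dvd (2 * int p + (if odd e \<and> even W then 1 else 0) + int a) - (2 * int p' + (if odd e' \<and> even W then 1 else 0) + int b)"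
    using pe pe' by (simp add: algebra_simps)
  then obtain z where z: "(2 * int p + (if odd e \<and> even W then 1 else 0) + int a) - (2 * int p' + (if odd e' \<and> even W then 1 else 0) + int b) = int m * z"
    by (auto simp: dvd_def)
  have pm: "p = kap * (p div kap) + p mod kap" "p' = kap * (p' div kap) + p' mod kap" by simp_all
  have pml: "p mod kap < kap" "p' mod kap < kap" using k by simp_all
  have e1: "int p = int kap * int (p div kap) + int (p mod kap)"
    by (metis div_mult_mod_eq of_nat_add of_nat_mult mult.commute)
  have e2: "int p' = int kap * int (p div kap) + int (p' mod kap)"
    using same p_def p'_def by (metis div_mult_mod_eq of_nat_add of_nat_mult mult.commute)
  have close: "int p - int p' < int kap" "int p' - int p < int kap"
    using e1 e2 pml by linarith+
  define d1 :: int where "d1 = (if odd e \<and> even W then 1 else 0)"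
  define d2 :: int where "d2 = (if odd e' \<and> even W then 1 else 0)"
  have zz: "2 * int p + d1 + int a - (2 * int p' + d2 + int b) = int m * z" using z d1_def d2_def by simp
  have d12: "0 \<le> d1" "d1 \<le> 1" "0 \<le> d2" "d2 \<le> 1" by (simp_all add: d1_def d2_def)
  have km: "2 * int kap \<le> int m" using k by simp
  have zle: "z \<le> 1"
  proof (rule ccontr)
    assume "\<not> z \<le> 1"
    then have "int m * 2 \<le> int m * z" using m0 by (intro mult_left_mono) auto
    then show False using zz close d12 ab km by linarith
  qed
  have zge: "z \<ge> -1"
  proof (rule ccontr)
    assume "\<not> z \<ge> -1"
    then have "int m * z \<le> int m * (-2)" using m0 by (intro mult_left_mono) auto
    then show False using zz close d12 ab km by linarith
  qed
  have c0: "p < (W+1) div 2 \<or> p' < (W+1) div 2 \<or> True" by simp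
  have pp: "p = p' \<Longrightarrow> e = e'" using posn_inj[of W] e p_def p'_def by (auto simp: inj_on_def)
  have divlt: "\<And>x. x < kap * h \<Longrightarrow> x div kap < h"
    by (metis less_mult_imp_div_less mult.commute)
  have divge: "\<And>x. kap * h \<le> x \<Longrightarrow> h \<le> x div kap"
    using k by (metis div_le_mono nonzero_mult_div_cancel_left not_one_le_zero)
  consider "z = 0" | "z = 1" | "z = -1" using zle zge by linarith
  then show ?thesis
  proof cases
    case 1
    then have eq: "2 * int p + d1 + int a = 2 * int p' + d2 + int b" using zz by simp
    show ?thesis
    proof (cases "p = p'")
      case True
      then have "e = e'" using pp by simp
      then show ?thesis using eq True d1_def d2_def by simp
    next
      case False
      then show ?thesis using eq ev ev' d1_def d2_def ab by (auto split: if_splits)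
    qed
  next
    case 2
    then have eq: "2 * int p + d1 + int a - (2 * int p' + d2 + int b) = int m" using zz by simp
    then have "d1 = 1" "int a = 1" "d2 = 0" "int b = 0" "int m = 2 * int kap" "int p - int p' = int kap - 1"
      using close d12 ab km by linarith+
    then have h1: "odd e" "even W" "\<not> (odd e' \<and> even W)" "m = 2*kap" unfolding d1_def d2_def
      by (auto split: if_splits)
    then have "even e'" by simp
    have "W = 2*(kap*h)" using h1(4) W(1) by simp
    then have cw: "(W+1) div 2 = kap * h" by simp
    have "h \<le> p div kap" using ev h1 cw divge by simp
    moreover have "p' div kap < h" using ev' \<open>even e'\<close> cw divlt by simp
    ultimately show ?thesis using same p_def p'_def by simp
  next
    case 3
    then have eq: "2 * int p + d1 + int a - (2 * int p' + d2 + int b) = - int m" using zz by simp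
    then have "d2 = 1" "int b = 1" "d1 = 0" "int a = 0" "int m = 2 * int kap" "int p' - int p = int kap - 1"
      using close d12 ab km by linarith+
    then have h1: "odd e'" "even W" "\<not> (odd e \<and> even W)" "m = 2*kap" unfolding d1_def d2_def
      by (auto split: if_splits)
    then have "even e" by simp
    have "W = 2*(kap*h)" using h1(4) W(1) by simp
    then have cw: "(W+1) div 2 = kap * h" by simp
    have "h \<le> p' div kap" using ev' h1 cw divge by simp
    moreover have "p div kap < h" using ev \<open>even e\<close> cw divlt by simp
    ultimately show ?thesis using same p_def p'_def by simp
  qed
qed



definition Dv :: "nat \<Rightarrow> nat \<Rightarrow> nat \<Rightarrow> nat \<Rightarrow> nat" where
"Dv G h g q = (if odd h \<and> q < 3 then (if q = 0 then g+1 else if q = 1 then G+1+g else G*h + G - 1 - 2*g)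
  else (if odd h then 2*G else 0) + (if odd h then q - 3 else q)*G
      + (if even (if odd h then q - 3 else q) then g+1 else G - g))"

definition sl :: "nat \<Rightarrow> nat \<Rightarrow> nat" where
  "sl h q = (if odd h \<and> q \<ge> 3 then q - 1 else q)"

definition rr :: "nat \<Rightarrow> nat \<Rightarrow> nat \<Rightarrow> nat \<Rightarrow> nat" where
  "rr G h q g = (if odd h \<and> q < 3 then g+1 else if even (if odd h then q - 3 else q) then g+1 else G - g)"

lemma Dv_slot:
  assumes "g < G" "\<not> (odd h \<and> q = 2)"
  shows "Dv G h g q = sl h q * G + rr G h q g"
proof (cases "odd h \<and> q \<ge> 3")
  case True
  then obtain u where u: "q = u + 3" by (metis add.commute le_Suc_ex)
  have "(u+2)*G = 2*G + u*G" by (simp add: algebra_simps)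
  then show ?thesis using True u unfolding Dv_def sl_def rr_def by simp
next
  case False
  then show ?thesis using assms unfolding Dv_def sl_def rr_def by auto
qed

lemma rr_bounds: "g < G \<Longrightarrow> 1 \<le> rr G h q g \<and> rr G h q g \<le> G"
  unfolding rr_def by auto

lemma rr_inj: "g < G \<Longrightarrow> g' < G \<Longrightarrow> rr G h q g = rr G h q g' \<Longrightarrow> g = g'"
  unfolding rr_def by (auto split: if_splits)

lemma slot_eq:
  fixes a b r1 r2 G :: nat
  assumes "1 \<le> r1" "r1 \<le> G" "1 \<le> r2" "r2 \<le> G" "a*G + r1 = b*G + r2"
  shows "a = b \<and> r1 = r2"
proof -
  have "\<not> a < b"
  proof
    assume "a < b"
    then have "(a+1)*G \<le> b*G" by (intro mult_le_mono1) simp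
    then show False using assms by (simp add: algebra_simps)
  qed
  moreover have "\<not> b < a"
  proof
    assume "b < a"
    then have "(b+1)*G \<le> a*G" by (intro mult_le_mono1) simp
    then show False using assms by (simp add: algebra_simps)
  qed
  ultimately show ?thesis using assms by simp
qed

lemma sl_bound:
  assumes "q < h" "\<not> (odd h \<and> q = 2)" "h \<ge> 2"
  shows "sl h q + 1 \<le> (if odd h then h - 1 else h)"
proof -
  have "odd h \<Longrightarrow> h \<ge> 3" using assms(3) by presburger
  then show ?thesis using assms unfolding sl_def by auto
qed

lemma Dv_nz_le:
  assumes "g < G" "q < h" "\<not> (odd h \<and> q = 2)" "h \<ge> 2"
  shows "Dv G h g q \<le> (if odd h then h - 1 else h) * G"
proof -
  have "Dv G h g q \<le> sl h q * G + G" using Dv_slot[OF assms(1,3)] rr_bounds[OF assms(1)] by simp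
  also have "\<dots> = (sl h q + 1) * G" by simp
  also have "\<dots> \<le> (if odd h then h - 1 else h) * G" by (intro mult_le_mono1 sl_bound assms)
  finally show ?thesis .
qed

lemma Dv_z: "odd h \<Longrightarrow> Dv G h g 2 = G*h + G - 1 - 2*g"
  unfolding Dv_def by simp

lemma Dv_ge1: "g < G \<Longrightarrow> q < h \<Longrightarrow> h \<ge> 2 \<Longrightarrow> 1 \<le> Dv G h g q"
proof (cases "odd h \<and> q = 2")
  case True
  assume "g < G" "h \<ge> 2"
  moreover have "G * 2 \<le> G * h" using \<open>h \<ge> 2\<close> by simp
  moreover have "Dv G h g q = G*h + G - 1 - 2*g" using True Dv_z by simp
  ultimately show ?thesis by linarith
next
  case False
  assume g: "g < G"
  have "1 \<le> rr G h q g" using rr_bounds[OF g] by simp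
  then show ?thesis using Dv_slot[OF g False] by simp
qed

lemma zarith1: "G*2 \<le> (H::nat) \<Longrightarrow> g < G \<Longrightarrow> g' < G \<Longrightarrow> H + G - Suc(2*g) = H + G - Suc(2*g') \<Longrightarrow> g = g'"
  by linarith

lemma zarith2:
  fixes G H g g' :: nat
  assumes "G*2 \<le> H" "g < G" "g' < G"
  shows "H + G - Suc(2*g) + (H + G - Suc(2*g')) \<noteq> Suc (2*H)"
proof
  assume h: "H + G - Suc(2*g) + (H + G - Suc(2*g')) = Suc (2*H)"
  have l1: "Suc(2*g) \<le> H + G" "Suc(2*g') \<le> H + G" using assms by linarith+
  have a1: "H + G - Suc(2*g) + Suc(2*g) = H + G" using l1(1) by simp
  have a2: "H + G - Suc(2*g') + Suc(2*g') = H + G" using l1(2) by simp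
  have "H + G - Suc(2*g) + (H + G - Suc(2*g')) + 2*(g+g'+1) = 2*(H+G)" using a1 a2 by simp
  then have "Suc (2*H) + 2*(g+g'+1) = 2*(H+G)" using h by simp
  then have "even (Suc (2*H) + 2*(g+g'+1))" by (metis dvd_triv_left)
  then show False by simp
qed

lemma zarith3: "G*3 \<le> (H::nat) \<Longrightarrow> x < G \<Longrightarrow> Suc (x + (x + (H + G - Suc (2 * x)))) = G + H"
  by linarith

lemma Dv_inj:
  assumes "g < G" "g' < G" "q < h" "q' < h" "h \<ge> 2" "Dv G h g q = Dv G h g' q'"
  shows "g = g' \<and> q = q'"
proof -
  have oh: "odd h \<Longrightarrow> h \<ge> 3" using assms(5) by presburger
  have hm: "odd h \<Longrightarrow> (h - 1) * G + G = G * h" using assms(5) by (simp add: algebra_simps)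
  consider "odd h \<and> q = 2 \<and> q' = 2" | "odd h \<and> q = 2 \<and> q' \<noteq> 2" | "odd h \<and> q \<noteq> 2 \<and> q' = 2"
    | "\<not> (odd h \<and> q = 2)" "\<not> (odd h \<and> q' = 2)" by blast
  then show ?thesis
  proof cases
    case 1
    have "G * 2 \<le> G * h" using assms by simp
    then show ?thesis using 1 assms Dv_z[of h G g] Dv_z[of h G g'] zarith1[of G "G*h" g g'] by simp
  next
    case 2
    then have "Dv G h g' q' \<le> (h - 1) * G" using Dv_nz_le[OF assms(2,4) _ assms(5)] by simp
    then show ?thesis using 2 assms Dv_z hm by simp
  next
    case 3
    then have "Dv G h g q \<le> (h - 1) * G" using Dv_nz_le[OF assms(1,3) _ assms(5)] by simp
    then show ?thesis using 3 assms Dv_z hm by simp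
  next
    case 4
    have "sl h q = sl h q' \<and> rr G h q g = rr G h q' g'"
      using assms(6) Dv_slot[OF assms(1) 4(1)] Dv_slot[OF assms(2) 4(2)] rr_bounds[OF assms(1)] rr_bounds[OF assms(2)]
      by (intro slot_eq) auto
    then have "q = q'" using 4 unfolding sl_def by (auto split: if_splits)
    then show ?thesis using rr_inj assms \<open>sl h q = sl h q' \<and> _\<close> by blast
  qed
qed

lemma Dv_nsum:
  assumes "g < G" "g' < G" "q < h" "q' < h" "h \<ge> 2"
  shows "Dv G h g q + Dv G h g' q' \<noteq> 2*(G*h) + 1"
proof -
  have hm: "odd h \<Longrightarrow> (h - 1) * G + G = G * h" using assms(5) by (simp add: algebra_simps)
  have hm2: "h * G = G * h" by simp
  consider "odd h \<and> q = 2 \<and> q' = 2" | "odd h \<and> q = 2 \<and> q' \<noteq> 2" | "odd h \<and> q \<noteq> 2 \<and> q' = 2"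
    | "\<not> (odd h \<and> q = 2)" "\<not> (odd h \<and> q' = 2)" by blast
  then show ?thesis
  proof cases
    case 1
    have "G * 2 \<le> G * h" using assms by simp
    then show ?thesis using 1 assms Dv_z[of h G g] Dv_z[of h G g'] zarith2[of G "G*h" g g'] by simp
  next
    case 2
    then have "Dv G h g' q' \<le> (h - 1) * G" using Dv_nz_le[OF assms(2,4) _ assms(5)] by simp
    then show ?thesis using 2 assms Dv_z hm by simp
  next
    case 3
    then have "Dv G h g q \<le> (h - 1) * G" using Dv_nz_le[OF assms(1,3) _ assms(5)] by simp
    then show ?thesis using 3 assms Dv_z hm by simp
  next
    case 4
    have "Dv G h g q \<le> h * G" using Dv_nz_le[OF assms(1,3) 4(1) assms(5)] 
      by (metis (full_types) diff_le_self le_trans mult_le_mono1)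
    moreover have "Dv G h g' q' \<le> h * G" using Dv_nz_le[OF assms(2,4) 4(2) assms(5)]
      by (metis (full_types) diff_le_self le_trans mult_le_mono1)
    ultimately show ?thesis using hm2 by linarith
  qed
qed

lemma Dv_le: 
  assumes "g < G" "q < h" "h \<ge> 2"
  shows "Dv G h g q \<le> 2*(G*h)"
proof (cases "odd h \<and> q = 2")
  case True
  have "G * 2 \<le> G * h" using assms by simp
  moreover have "Dv G h g q = G*h + G - 1 - 2*g" using True Dv_z by simp
  ultimately show ?thesis using assms by linarith
next
  case False
  have "Dv G h g q \<le> h * G" using Dv_nz_le[OF assms(1,2) False assms(3)]
    by (metis (full_types) diff_le_self le_trans mult_le_mono1)
  then show ?thesis by (simp add: mult.commute)
qed

lemma sum_pairs: "(\<Sum>q<2*p. f q) = (\<Sum>w<p. f (2*w) + f (2*w+1::nat))"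
  by (induction p) (simp_all add: ac_simps)

lemma sum_pairs3: "(\<Sum>q<3+2*p. f q) = f 0 + f 1 + f 2 + (\<Sum>w<p. f (3+2*w) + f (4+2*w::nat))"
proof (induction p)
  case 0
  have "{..<3::nat} = {0,1,2}" by auto
  then have "(\<Sum>q<3. f q) = f 0 + f 1 + f 2" by (simp add: ac_simps)
  then show ?case by simp
next
  case (Suc p)
  have "{..<3+2*Suc p} = insert (3+2*p+1) (insert (3+2*p) {..<3+2*p})" by auto
  then have "(\<Sum>q<3+2*Suc p. f q) = f (3+2*p+1) + f (3+2*p) + (\<Sum>q<3+2*p. f q)" by (simp add: add.assoc)
  then show ?case using Suc by (simp add: ac_simps)
qed

lemma Dv_rowsum:
  assumes "g < G" "g' < G" "h \<ge> 2"
  shows "(\<Sum>q<h. Dv G h g q) = (\<Sum>q<h. Dv G h g' q)"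
proof (cases "even h")
  case True
  then obtain p where p: "h = 2*p" by blast
  have pair: "Dv G h x (2*w) + Dv G h x (2*w+1) = 2*w*G + (2*w+1)*G + G + 1" if "x < G" for x w
    using True that unfolding Dv_def by simp
  have "(\<Sum>q<h. Dv G h g q) = (\<Sum>w<p. Dv G h g (2*w) + Dv G h g (2*w+1))"
    by (simp only: p sum_pairs)
  also have "\<dots> = (\<Sum>w<p. Dv G h g' (2*w) + Dv G h g' (2*w+1))"
    by (rule sum.cong[OF refl]) (simp only: pair assms)
  also have "\<dots> = (\<Sum>q<h. Dv G h g' q)"
    by (simp only: p sum_pairs)
  finally show ?thesis .
next
  case False
  have "h = 3+2*((h-3) div 2)" using assms(3) False by presburger
  then obtain p where p: "h = 3+2*p" by blast
  have pair: "Dv G h x (3+2*w) + Dv G h x (4+2*w) = 2*G + 2*w*G + 2*G + (2*w+1)*G + G + 1" if "x < G" for x w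
    using False that unfolding Dv_def by simp
  have G3: "G * 3 \<le> G * h" using p by simp
  have first: "Dv G h x 0 + Dv G h x 1 + Dv G h x 2 = G*h + 2*G + 1" if "x < G" for x
    using False that zarith3[OF G3] unfolding Dv_def by simp
  have "(\<Sum>q<h. Dv G h g q) = Dv G h g 0 + Dv G h g 1 + Dv G h g 2 + (\<Sum>w<p. Dv G h g (3+2*w) + Dv G h g (4+2*w))"
    by (simp only: p sum_pairs3)
  also have "\<dots> = Dv G h g' 0 + Dv G h g' 1 + Dv G h g' 2 + (\<Sum>w<p. Dv G h g' (3+2*w) + Dv G h g' (4+2*w))"
    using first[OF assms(1)] first[OF assms(2)] pair[OF assms(1)] pair[OF assms(2)] by simp
  also have "\<dots> = (\<Sum>q<h. Dv G h g' q)"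
    by (simp only: p sum_pairs3)
  finally show ?thesis .
qed



definition cellf :: "nat \<Rightarrow> nat \<Rightarrow> nat \<Rightarrow> nat\<times>nat\<times>bool \<Rightarrow> nat\<times>nat\<times>nat" where
  "cellf m W kap x = (case x of (t,e,b) \<Rightarrow> (t, (e + (if b then 1 else 0)) mod m, posn W e div kap))"

definition valf :: "nat \<Rightarrow> nat \<Rightarrow> nat \<Rightarrow> nat \<Rightarrow> nat\<times>nat\<times>bool \<Rightarrow> int" where
  "valf N G h m x = (case x of (t,e,b) \<Rightarrow>
     (if b then int N - int (Dv G h (t*m + e mod m) (e div m)) else int (Dv G h (t*m + e mod m) (e div m))))"

lemma mod_Suc_iff:
  fixes e i m :: nat
  assumes "i < m"
  shows "(e + 1) mod m = i \<longleftrightarrow> e mod m = (i + m - 1) mod m"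
proof -
  have m0: "m > 0" using assms by simp
  have lt: "e mod m < m" using m0 by simp
  have ms: "(e + 1) mod m = (if Suc (e mod m) = m then 0 else Suc (e mod m))"
    using mod_Suc[of e m] by simp
  show ?thesis
  proof (cases "i = 0")
    case True
    have "(i + m - 1) mod m = m - 1" using True m0 by simp
    then show ?thesis unfolding ms using lt True m0 by (cases "Suc (e mod m) = m") auto
  next
    case False
    have "i + m - 1 = (i - 1) + m" using False by simp
    then have "(i + m - 1) mod m = (i - 1) mod m" by (simp only: mod_add_self2)
    also have "\<dots> = i - 1" using assms by simp
    finally have im: "(i + m - 1) mod m = i - 1" .
    show ?thesis unfolding im ms using lt False assms by (cases "Suc (e mod m) = m") auto
  qed
qed

lemma tm_inj:
  fixes t t' r r' m :: nat
  assumes "r < m" "r' < m" "t*m + r = t'*m + r'"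
  shows "t = t' \<and> r = r'"
proof -
  have a: "(t*m + r) div m = t" using assms(1) by simp
  have b: "(t'*m + r') div m = t'" using assms(2) by simp
  have "t = t'" by (metis a b assms(3))
  then show ?thesis using assms by simp
qed

lemma class_eq:
  fixes m h i :: nat
  assumes "i < m"
  shows "{e. e < m*h \<and> e mod m = i} = (\<lambda>q. i + m*q) ` {..<h}"
proof (rule set_eqI, rule iffI)
  fix e assume e: "e \<in> {e. e < m*h \<and> e mod m = i}"
  then have "e = i + m*(e div m)" using div_mult_mod_eq[of e m] by (simp add: mult.commute)
  moreover have "e div m < h" using e by (simp add: less_mult_imp_div_less mult.commute)
  ultimately show "e \<in> (\<lambda>q. i + m*q) ` {..<h}" by blast
next
  fix e assume "e \<in> (\<lambda>q. i + m*q) ` {..<h}"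
  then obtain q where q: "q < h" "e = i + m*q" by auto
  then have "i + m*q < m + m*q" using assms by simp
  also have "\<dots> = m * Suc q" by simp
  also have "\<dots> \<le> m*h" using q by (intro mult_le_mono2) simp
  finally show "e \<in> {e. e < m*h \<and> e mod m = i}" using q assms by simp
qed

lemma class_inj: "inj_on (\<lambda>q. i + m*q) {..<h}" if "i < (m::nat)"
  using that by (auto simp: inj_on_def)

lemma class_card:
  fixes m h i :: nat
  assumes "i < m"
  shows "card {e. e < m*h \<and> e mod m = i} = h"
  unfolding class_eq[OF assms] using card_image[OF class_inj[OF assms]] by simp

lemma class_sum:
  fixes m h i :: nat and F :: "nat \<Rightarrow> nat \<Rightarrow> 'a::comm_monoid_add"
  assumes "i < m"
  shows "(\<Sum>e\<in>{e. e < m*h \<and> e mod m = i}. F (e mod m) (e div m)) = (\<Sum>q<h. F i q)"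
  unfolding class_eq[OF assms] sum.reindex[OF class_inj[OF assms]] using assms by simp



lemma bij_from_inj_card:
  assumes "inj_on f A" "f ` A \<subseteq> B" "finite B" "card A = card B"
  shows "bij_betw f A B"
proof -
  have "card (f ` A) = card B" using card_image[OF assms(1)] assms(4) by simp
  then have "f ` A = B" using card_subset_eq[OF assms(3,2)] by simp
  then show ?thesis using assms(1) by (simp add: bij_betw_def)
qed

lemma construct:
  fixes m n s k c h kap :: nat
  assumes s: "s = 2*h" and k: "k = 2*kap" and h2: "h \<ge> 2" and kap1: "kap \<ge> 1"
    and km: "k \<le> m" and eq: "m*s = n*k" and c: "c > 0"
  shows "\<exists>A. is_MS0_ZN_star (n*k*c + 1) m n s k c A"
proof -
  define W where "W = m*h"
  define G where "G = c*m"
  define N where "N = n*k*c + 1"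
  have m0: "m > 0" using km k kap1 by simp
  have WN: "W = n*kap" using eq s k W_def by simp
  have NG: "N = 2*(G*h) + 1" using eq s N_def G_def by (simp add: algebra_simps)
  define X where "X = {..<c} \<times> {..<W} \<times> (UNIV :: bool set)"
  let ?cell = "cellf m W kap"
  let ?val = "valf N G h m"
  have gq: "t*m + e mod m < G \<and> e div m < h" if "t < c" "e < W" for t e
  proof -
    have "t*m + e mod m < t*m + m" using m0 by simp
    also have "\<dots> = (t+1)*m" by simp
    also have "\<dots> \<le> c*m" using that by (intro mult_le_mono1) simp
    finally have "t*m + e mod m < G" by (simp add: G_def)
    moreover have "e div m < h" using that W_def by (simp add: less_mult_imp_div_less mult.commute)
    ultimately show ?thesis by simp
  qed
  have fin: "finite X" unfolding X_def by simp
  have inj: "inj_on ?cell X"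
  proof (rule inj_onI)
    fix x y assume xX: "x \<in> X" and yX: "y \<in> X" and ce: "?cell x = ?cell y"
    obtain t e b where x: "x = (t,e,b)" "t < c" "e < W" using xX unfolding X_def by (cases x) auto
    obtain t' e' b' where y: "y = (t',e',b')" "t' < c" "e' < W" using yX unfolding X_def by (cases y) auto
    have c1: "t = t'" "(e + (if b then 1 else 0)) mod m = (e' + (if b' then 1 else 0)) mod m"
      "posn W e div kap = posn W e' div kap"
      using ce x y by (simp_all add: cellf_def)
    have "e = e' \<and> (if b then 1 else 0) = (if b' then 1 else (0::nat))"
      by (rule chain[of W m h n kap e e' "if b then 1 else 0" "if b' then 1 else 0"])
         (use W_def WN k km kap1 x y c1 in auto)
    then show "x = y" using x y c1 by (auto split: if_splits)
  qed
  have dvb: "1 \<le> Dv G h (t*m + e mod m) (e div m) \<and> Dv G h (t*m + e mod m) (e div m) \<le> 2*(G*h)"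
    if "t < c" "e < W" for t e
    using Dv_ge1[of "t*m + e mod m" G "e div m" h] Dv_le[of "t*m + e mod m" G "e div m" h] gq[OF that] h2 by simp
  have bij: "bij_betw ?val X (ZN_star N)"
  proof (rule bij_from_inj_card)
    show "inj_on ?val X"
    proof (rule inj_onI)
      fix x y assume xX: "x \<in> X" and yX: "y \<in> X" and ve: "?val x = ?val y"
      obtain t e b where x: "x = (t,e,b)" "t < c" "e < W" using xX unfolding X_def by (cases x) auto
      obtain t' e' b' where y: "y = (t',e',b')" "t' < c" "e' < W" using yX unfolding X_def by (cases y) auto
      define g where "g = t*m + e mod m"
      define g' where "g' = t'*m + e' mod m"
      have g1: "g < G" "e div m < h" using gq[OF x(2,3)] g_def by auto
      have g2: "g' < G" "e' div m < h" using gq[OF y(2,3)] g'_def by auto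
      have vx: "?val x = (if b then int N - int (Dv G h g (e div m)) else int (Dv G h g (e div m)))"
        using x g_def by (simp add: valf_def)
      have vy: "?val y = (if b' then int N - int (Dv G h g' (e' div m)) else int (Dv G h g' (e' div m)))"
        using y g'_def by (simp add: valf_def)
      show "x = y"
      proof (cases "b = b'")
        case True
        then have "Dv G h g (e div m) = Dv G h g' (e' div m)" using ve vx vy by (auto split: if_splits)
        then have "g = g' \<and> e div m = e' div m" using Dv_inj g1 g2 h2 by blast
        then have "t = t' \<and> e mod m = e' mod m" using tm_inj[of "e mod m" m "e' mod m" t t'] m0 g_def g'_def
          by simp
        then have "e = e'" using \<open>g = g' \<and> e div m = e' div m\<close> by (metis div_mult_mod_eq)
        then show ?thesis using x y True \<open>t = t' \<and> _\<close> by simp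
      next
        case False
        then have "int (Dv G h g (e div m)) + int (Dv G h g' (e' div m)) = int N" using ve vx vy
          by (auto split: if_splits)
        then have "Dv G h g (e div m) + Dv G h g' (e' div m) = 2*(G*h) + 1" using NG by linarith
        then show ?thesis using Dv_nsum g1 g2 h2 by blast
      qed
    qed
  next
    show "?val ` X \<subseteq> ZN_star N"
    proof
      fix v assume "v \<in> ?val ` X"
      then obtain t e b where x: "v = ?val (t,e,b)" "t < c" "e < W" unfolding X_def by auto
      define d where "d = Dv G h (t*m + e mod m) (e div m)"
      have "1 \<le> d" "d + 1 \<le> N" using dvb[OF x(2,3)] NG d_def by auto
      then have "1 \<le> int d" "int d \<le> int N - 1" by linarith+
      moreover have "v = (if b then int N - int d else int d)" using x(1) d_def by (simp add: valf_def)
      ultimately show "v \<in> ZN_star N" by (auto simp: ZN_star_def)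
    qed
  next
    show "finite (ZN_star N)" by (simp add: ZN_star_def)
  next
    have "card X = c * W * 2" unfolding X_def by (simp add: card_cartesian_product)
    moreover have "card (ZN_star N) = N - 1" unfolding ZN_star_def by simp
    moreover have "G*h = c*W" unfolding G_def W_def by (simp add: mult.assoc)
    ultimately show "card X = card (ZN_star N)" using NG by simp
  qed
  have rng: "fst (?cell x) < c \<and> fst (snd (?cell x)) < m \<and> snd (snd (?cell x)) < n" if xX: "x \<in> X" for x
  proof -
    obtain t e b where x: "x = (t,e,b)" "t < c" "e < W" using xX unfolding X_def by (cases x) auto
    have "posn W e < n * kap" using posn_lt[OF x(3)] WN by simp
    then have "posn W e div kap < n" by (simp add: less_mult_imp_div_less)
    then show ?thesis using x m0 by (simp add: cellf_def)
  qed
  have rowc: "card {x\<in>X. fst (?cell x) = t \<and> fst (snd (?cell x)) = i} = s"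
    and rows: "(\<Sum>x\<in>{x\<in>X. fst (?cell x) = t \<and> fst (snd (?cell x)) = i}. ?val x) mod int N = 0"
    if ti: "t < c" "i < m" for t i
  proof -
    define i' where "i' = (i + m - 1) mod m"
    have i'm: "i' < m" using m0 i'_def by simp
    define E1 where "E1 = {e. e < m*h \<and> e mod m = i}"
    define E2 where "E2 = {e. e < m*h \<and> e mod m = i'}"
    let ?S = "{x\<in>X. fst (?cell x) = t \<and> fst (snd (?cell x)) = i}"
    have Seq: "?S = (\<lambda>e. (t,e,False)) ` E1 \<union> (\<lambda>e. (t,e,True)) ` E2"
    proof (rule set_eqI, rule iffI)
      fix x assume xS: "x \<in> ?S"
      obtain t' e b where x: "x = (t',e,b)" "t' < c" "e < W" using xS unfolding X_def by (cases x) auto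
      have "t' = t" "(e + (if b then 1 else 0)) mod m = i" using xS x by (simp_all add: cellf_def)
      then show "x \<in> (\<lambda>e. (t,e,False)) ` E1 \<union> (\<lambda>e. (t,e,True)) ` E2"
        using x mod_Suc_iff[OF ti(2), of e] unfolding E1_def E2_def i'_def W_def
        by (cases b) auto
    next
      fix x assume "x \<in> (\<lambda>e. (t,e,False)) ` E1 \<union> (\<lambda>e. (t,e,True)) ` E2"
      then show "x \<in> ?S"
        using ti mod_Suc_iff[OF ti(2)] unfolding E1_def E2_def i'_def W_def X_def
        by (auto simp: cellf_def)
    qed
    have disj: "(\<lambda>e. (t,e,False)) ` E1 \<inter> (\<lambda>e. (t,e,True)) ` E2 = {}" by auto
    have inj1: "inj_on (\<lambda>e. (t,e,False)) E1" by (auto simp: inj_on_def)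
    have inj2: "inj_on (\<lambda>e. (t,e,True)) E2" by (auto simp: inj_on_def)
    have fin1: "finite E1" unfolding E1_def by simp
    have fin2: "finite E2" unfolding E2_def by simp
    have cE1: "card E1 = h" unfolding E1_def by (rule class_card[OF ti(2)])
    have cE2: "card E2 = h" unfolding E2_def by (rule class_card[OF i'm])
    show "card ?S = s" unfolding Seq
      using card_Un_disjoint[OF finite_imageI[OF fin1] finite_imageI[OF fin2] disj]
        card_image[OF inj1] card_image[OF inj2] cE1 cE2 s by simp
    have sum1: "(\<Sum>e\<in>E1. ?val (t,e,False)) = (\<Sum>q<h. int (Dv G h (t*m+i) q))"
      unfolding E1_def valf_def
      using class_sum[OF ti(2), where h=h and F="\<lambda>r q. int (Dv G h (t*m+r) q)"] by simp
    have sum2: "(\<Sum>e\<in>E2. ?val (t,e,True)) = (\<Sum>q<h. int N - int (Dv G h (t*m+i') q))"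
      unfolding E2_def valf_def
      using class_sum[OF i'm, where h=h and F="\<lambda>r q. int N - int (Dv G h (t*m+r) q)"] by simp
    have W1: "i < W" "i' < W" using ti i'm W_def h2 by (auto intro: less_le_trans[of _ m] simp: W_def)
    have g1: "t*m + i < G" using gq[OF ti(1) W1(1)] ti by simp
    have g2: "t*m + i' < G" using gq[OF ti(1) W1(2)] i'm by simp
    have rs: "(\<Sum>q<h. Dv G h (t*m+i) q) = (\<Sum>q<h. Dv G h (t*m+i') q)"
      by (rule Dv_rowsum[OF g1 g2 h2])
    have "(\<Sum>x\<in>?S. ?val x) = (\<Sum>e\<in>E1. ?val (t,e,False)) + (\<Sum>e\<in>E2. ?val (t,e,True))"
      unfolding Seq
      by (simp add: sum.union_disjoint[OF finite_imageI[OF fin1] finite_imageI[OF fin2] disj]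
          sum.reindex[OF inj1] sum.reindex[OF inj2])
    also have "\<dots> = int h * int N"
      unfolding sum1 sum2 sum_subtractf using rs
      by (simp flip: of_nat_sum)
    finally show "(\<Sum>x\<in>?S. ?val x) mod int N = 0" by simp
  qed
  have colc: "card {x\<in>X. fst (?cell x) = t \<and> snd (snd (?cell x)) = j} = k"
    and cols: "(\<Sum>x\<in>{x\<in>X. fst (?cell x) = t \<and> snd (snd (?cell x)) = j}. ?val x) mod int N = 0"
    if tj: "t < c" "j < n" for t j
  proof -
    define E where "E = {e. e < W \<and> posn W e div kap = j}"
    let ?S = "{x\<in>X. fst (?cell x) = t \<and> snd (snd (?cell x)) = j}"
    have Seq: "?S = (\<lambda>e. (t,e,False)) ` E \<union> (\<lambda>e. (t,e,True)) ` E"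
    proof (rule set_eqI, rule iffI)
      fix x assume xS: "x \<in> ?S"
      obtain t' e b where x: "x = (t',e,b)" "t' < c" "e < W" using xS unfolding X_def by (cases x) auto
      have "t' = t" "posn W e div kap = j" using xS x by (simp_all add: cellf_def)
      then show "x \<in> (\<lambda>e. (t,e,False)) ` E \<union> (\<lambda>e. (t,e,True)) ` E"
        using x unfolding E_def by (cases b) auto
    next
      fix x assume "x \<in> (\<lambda>e. (t,e,False)) ` E \<union> (\<lambda>e. (t,e,True)) ` E"
      then show "x \<in> ?S" using tj unfolding E_def X_def by (auto simp: cellf_def)
    qed
    have disj: "(\<lambda>e. (t,e,False)) ` E \<inter> (\<lambda>e. (t,e,True)) ` E = {}" by auto
    have inj1: "inj_on (\<lambda>e. (t,e,False)) E" by (auto simp: inj_on_def)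
    have inj2: "inj_on (\<lambda>e. (t,e,True)) E" by (auto simp: inj_on_def)
    have fin: "finite E" unfolding E_def by simp
    have P: "posn W ` E = {j*kap..<j*kap+kap}"
    proof (rule set_eqI, rule iffI)
      fix p assume "p \<in> posn W ` E"
      then obtain e where e: "e < W" "posn W e div kap = j" "p = posn W e" unfolding E_def by auto
      have "j*kap \<le> p" using e by (metis div_times_less_eq_dividend mult.commute)
      moreover have "p < j*kap + kap" using e kap1
        by (metis add.commute div_mult_mod_eq mod_less_divisor mult.commute nat_add_left_cancel_less
            order_less_le_trans zero_less_one le_refl)
      ultimately show "p \<in> {j*kap..<j*kap+kap}" by simp
    next
      fix p assume p: "p \<in> {j*kap..<j*kap+kap}"
      have "j*kap + kap = (j+1)*kap" by simp
      also have "\<dots> \<le> n*kap" using tj by (intro mult_le_mono1) simp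
      finally have "p < W" using p WN by simp
      then have "p \<in> posn W ` {..<W}" using posn_bij[of W] unfolding bij_betw_def by simp
      then obtain e where e: "e < W" "posn W e = p" by auto
      have "p div kap = j" using p kap1 by (intro div_nat_eqI) (auto simp: mult.commute)
      then show "p \<in> posn W ` E" using e unfolding E_def by auto
    qed
    have injE: "inj_on (posn W) E" using posn_inj[of W] unfolding E_def by (rule inj_on_subset) auto
    have cE: "card E = kap" using card_image[OF injE] P by simp
    show "card ?S = k" unfolding Seq
      using card_Un_disjoint[OF finite_imageI[OF fin] finite_imageI[OF fin] disj]
        card_image[OF inj1] card_image[OF inj2] cE k by simp
    have "(\<Sum>x\<in>?S. ?val x) = (\<Sum>e\<in>E. ?val (t,e,False)) + (\<Sum>e\<in>E. ?val (t,e,True))"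
      unfolding Seq
      by (simp add: sum.union_disjoint[OF finite_imageI[OF fin] finite_imageI[OF fin] disj]
          sum.reindex[OF inj1] sum.reindex[OF inj2])
    also have "\<dots> = (\<Sum>e\<in>E. int N)"
      unfolding sum.distrib[symmetric] by (rule sum.cong) (auto simp: valf_def)
    also have "\<dots> = int (card E) * int N" by simp
    finally show "(\<Sum>x\<in>?S. ?val x) mod int N = 0" by simp
  qed
  have "is_MS0_ZN_star N m n s k c (mkA ?cell ?val X)"
    by (rule generic[OF fin inj bij rng rowc colc rows cols])
  then show ?thesis unfolding N_def by blast
qed



lemma transpose_MS:
  assumes "is_MS0_ZN_star N n m k s c B"
  shows "is_MS0_ZN_star N m n s k c (\<lambda>t i j. B t j i)"
proof -
  have rc: "row_cells (\<lambda>t i j. B t j i) n t i = col_cells B n t i" for t i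
    by (simp add: row_cells_def col_cells_def)
  have cc: "col_cells (\<lambda>t i j. B t j i) m t j = row_cells B m t j" for t j
    by (simp add: row_cells_def col_cells_def)
  have all: "\<forall>x \<in> ZN_star N. \<exists>!(t, i, j). B t i j = Some x"
    using assms unfolding is_MS0_ZN_star_def by (elim conjE)
  have u: "\<forall>x \<in> ZN_star N. \<exists>!(t, i, j). B t j i = Some x"
  proof
    fix x assume "x \<in> ZN_star N"
    then have "\<exists>!p. (case p of (t, i, j) \<Rightarrow> B t i j = Some x)" using all by blast
    then obtain p where p: "case p of (t, i, j) \<Rightarrow> B t i j = Some x"
      and pu: "\<And>q. (case q of (t, i, j) \<Rightarrow> B t i j = Some x) \<Longrightarrow> q = p"
      by (rule ex1E) blast
    obtain t i j where pe: "p = (t,i,j)" by (cases p)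
    show "\<exists>!(t, i, j). B t j i = Some x"
    proof (rule ex1I[of _ "(t,j,i)"])
      show "case (t,j,i) of (t, i, j) \<Rightarrow> B t j i = Some x" using p pe by simp
    next
      fix y assume y: "case y of (t, i, j) \<Rightarrow> B t j i = Some x"
      obtain t' i' j' where ye: "y = (t',i',j')" by (cases y)
      have "(t',j',i') = p" using pu[of "(t',j',i')"] y ye by simp
      then show "y = (t,j,i)" using ye pe by simp
    qed
  qed
  note AA = assms[unfolded is_MS0_ZN_star_def]
  note A1 = AA[THEN conjunct1]
  note A2 = AA[THEN conjunct2, THEN conjunct1]
  note A4 = AA[THEN conjunct2, THEN conjunct2, THEN conjunct2, THEN conjunct1]
  note A5 = AA[THEN conjunct2, THEN conjunct2, THEN conjunct2, THEN conjunct2, THEN conjunct1]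
  note A6 = AA[THEN conjunct2, THEN conjunct2, THEN conjunct2, THEN conjunct2, THEN conjunct2, THEN conjunct1]
  note A7 = AA[THEN conjunct2, THEN conjunct2, THEN conjunct2, THEN conjunct2, THEN conjunct2, THEN conjunct2]
  show ?thesis unfolding is_MS0_ZN_star_def rc cc
  proof (intro conjI)
    show "\<forall>t i j. (c \<le> t \<or> m \<le> i \<or> n \<le> j) \<longrightarrow> B t j i = None" using A1 by blast
    show "\<forall>t i j x. B t j i = Some x \<longrightarrow> x \<in> ZN_star N" using A2 by blast
  qed (use u A4 A5 A6 A7 in simp_all)
qed

theorem mainTheorem11:
  fixes m n s k c :: nat
  assumes "0 < m" "0 < n" "0 < s" "0 < k" "0 < c"
    and "2 \<le> s" "s \<le> n" "2 \<le> k" "k \<le> m"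
    and "m * s = n * k"
    and "even s" "even k" "(s, k) \<noteq> (2, 2)"
  shows "\<exists>A. is_MS0_ZN_star (n * k * c + 1) m n s k c A"
proof (cases "s \<ge> 4")
  case True
  obtain h where h: "s = 2*h" using assms(11) by blast
  obtain kap where kp: "k = 2*kap" using assms(12) by blast
  show ?thesis
    by (rule construct[OF h kp]) (use assms h kp True in auto)
next
  case False
  then have s2: "s = 2" using assms(6,11) by presburger
  then have "k \<noteq> 2" using assms(13) by auto
  then have k4: "k \<ge> 4" using assms(8,12) by presburger
  obtain h where h: "k = 2*h" using assms(12) by blast
  have "\<exists>B. is_MS0_ZN_star (m*s*c + 1) n m k s c B"
    by (rule construct[OF h, of s 1]) (use assms h s2 k4 in auto)
  then obtain B where "is_MS0_ZN_star (n*k*c + 1) n m k s c B" using assms(10) by auto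
  then show ?thesis using transpose_MS by blast
qed


end
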